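(* For $t=3$ topics, $r_3 = \frac{5}{6}$.
   Context: Let $t$ be a positive integer (the number of topics). A voter matrix with $t$ topics is a matrix $V\in\{Y,N\}^{n\times t}$ for some positive integer $n$ (rows are voters), subject to the standing assumption that in every column the number of entries $Y$ is at least the number of entries $N$. $\mathcal{V}_t$ is the set of all voter matrices with $t$ topics and any number of voters. A proposal is a vector $p\in\{Y,N\}^t$. A voter $v$ supports $p$ if the Hamming distance between $v$ and $p$ is at most $t/2$; $p$ is supported by $V$ if at least $n/2$ rows of $V$ support $p$. For $i=1,\dots,t$ let $m_i$ be the fraction of entries $Y$ in column $i$ of $V$, and $m_V=\frac1t\sum_i m_i$. For a proposal $p$ let $m_i'=m_i$ if $p_i=Y$ and $m_i'=1-m_i$ if $p_i=N$; set $R_p=\frac1t\sum_i m_i'$ and $r_p=R_p/m_V$. Let $r_V=\max r_p$, the maximum over all proposals $p$ supported by $V$, and $r_t=\inf_{V\in\mathcal{V}_t} r_V$. *)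

theory Defs
  imports Complex_Main
begin

text \<open>A voter is a row: a list of booleans of length t (True = Y, False = N).\<close>

definition voter_matrix :: "nat \<Rightarrow> bool list list \<Rightarrow> bool" where
  "voter_matrix t V \<longleftrightarrow> t > 0 \<and> V \<noteq> [] \<and> (\<forall>v\<in>set V. length v = t) \<and>
     (\<forall>j<t. length (filter (\<lambda>v. \<not> v ! j) V) \<le> length (filter (\<lambda>v. v ! j) V))"

definition hamming :: "nat \<Rightarrow> bool list \<Rightarrow> bool list \<Rightarrow> nat" where
  "hamming t v p = card {j. j < t \<and> v ! j \<noteq> p ! j}"

definition supports :: "nat \<Rightarrow> bool list \<Rightarrow> bool list \<Rightarrow> bool" where
  "supports t v p \<longleftrightarrow> real (hamming t v p) \<le> real t / 2"

definition supported :: "nat \<Rightarrow> bool list list \<Rightarrow> bool list \<Rightarrow> bool" where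
  "supported t V p \<longleftrightarrow> real (length (filter (\<lambda>v. supports t v p) V)) \<ge> real (length V) / 2"

definition frac_Y :: "bool list list \<Rightarrow> nat \<Rightarrow> real" where
  "frac_Y V j = real (length (filter (\<lambda>v. v ! j) V)) / real (length V)"

definition m_V :: "nat \<Rightarrow> bool list list \<Rightarrow> real" where
  "m_V t V = (\<Sum>j<t. frac_Y V j) / real t"

definition R_p :: "nat \<Rightarrow> bool list list \<Rightarrow> bool list \<Rightarrow> real" where
  "R_p t V p = (\<Sum>j<t. if p ! j then frac_Y V j else 1 - frac_Y V j) / real t"

definition r_p :: "nat \<Rightarrow> bool list list \<Rightarrow> bool list \<Rightarrow> real" where
  "r_p t V p = R_p t V p / m_V t V"

definition r_V :: "nat \<Rightarrow> bool list list \<Rightarrow> real" where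
  "r_V t V = Max {r_p t V p | p. length p = t \<and> supported t V p}"

definition r_t :: "nat \<Rightarrow> real" where
  "r_t t = Inf {r_V t V | V. voter_matrix t V}"

end

theory Submission imports Defs begin

definition cnt :: "bool list list \<Rightarrow> bool \<Rightarrow> bool \<Rightarrow> bool \<Rightarrow> nat" where
  "cnt V a b c = length (filter (\<lambda>w. w!0 = a \<and> w!1 = b \<and> w!2 = c) V)"

lemma sum8: "(\<Sum>a\<in>UNIV. \<Sum>b\<in>UNIV. \<Sum>c\<in>UNIV. f a b c) =
  f True True True + f True True False + f True False True + f True False False +
  f False True True + f False True False + f False False True + (f False False False :: 'a::comm_monoid_add)"
  by (simp add: UNIV_bool add_ac)

lemma cnt_Cons: "cnt (w#V) a b c = of_bool (w!0 = a \<and> w!1 = b \<and> w!2 = c) + cnt V a b c"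
  by (simp add: cnt_def)

lemma count_decomp:
  assumes "\<forall>w\<in>set V. P w = Q (w!0) (w!1) (w!2)"
  shows "length (filter P V) = (\<Sum>a\<in>UNIV. \<Sum>b\<in>UNIV. \<Sum>c\<in>UNIV. if Q a b c then cnt V a b c else 0)"
  using assms
proof (induction V)
  case Nil
  then show ?case by (simp add: cnt_def)
next
  case (Cons w V)
  then have IH: "length (filter P V) = (\<Sum>a\<in>UNIV. \<Sum>b\<in>UNIV. \<Sum>c\<in>UNIV. if Q a b c then cnt V a b c else 0)"
    and Pw: "P w = Q (w!0) (w!1) (w!2)" by auto
  show ?case
    unfolding sum8 cnt_Cons using IH Pw unfolding sum8
    by (cases "w!0"; cases "w!1"; cases "w!2") simp_all
qed

lemma card3: "card {j. j < (3::nat) \<and> R j} = of_bool (R 0) + of_bool (R 1) + of_bool (R 2)"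
proof -
  have e: "{j. j < (3::nat) \<and> R j} = (if R 0 then {0} else {}) \<union> (if R 1 then {1} else {}) \<union> (if R 2 then {2} else {})"
  proof -
    have l3: "j < (3::nat) \<longleftrightarrow> j = 0 \<or> j = 1 \<or> j = 2" for j by auto
    show ?thesis
    proof (rule set_eqI)
      fix j :: nat
      show "j \<in> {j. j < 3 \<and> R j} \<longleftrightarrow> j \<in> (if R 0 then {0} else {}) \<union> (if R 1 then {1} else {}) \<union> (if R 2 then {2} else {})"
        by (cases "j = 0"; cases "j = 1"; cases "j = 2") (auto simp: l3)
    qed
  qed
  show ?thesis unfolding e by (cases "R 0"; cases "R 1"; cases "R 2") auto
qed

definition tot :: "(bool \<Rightarrow> bool \<Rightarrow> bool \<Rightarrow> real) \<Rightarrow> real" where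
  "tot x = (\<Sum>a\<in>UNIV. \<Sum>b\<in>UNIV. \<Sum>c\<in>UNIV. x a b c)"
definition col :: "(bool \<Rightarrow> bool \<Rightarrow> bool \<Rightarrow> real) \<Rightarrow> nat \<Rightarrow> real" where
  "col x j = (\<Sum>a\<in>UNIV. \<Sum>b\<in>UNIV. \<Sum>c\<in>UNIV. if [a,b,c]!j then x a b c else 0)"
definition supx :: "(bool \<Rightarrow> bool \<Rightarrow> bool \<Rightarrow> real) \<Rightarrow> bool \<Rightarrow> bool \<Rightarrow> bool \<Rightarrow> real" where
  "supx x a b c = (\<Sum>a'\<in>UNIV. \<Sum>b'\<in>UNIV. \<Sum>c'\<in>UNIV.
     if of_bool (a' \<noteq> a) + of_bool (b' \<noteq> b) + of_bool (c' \<noteq> c) \<le> (1::nat) then x a' b' c' else 0)"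
definition Rx :: "(bool \<Rightarrow> bool \<Rightarrow> bool \<Rightarrow> real) \<Rightarrow> bool list \<Rightarrow> real" where
  "Rx x p = (\<Sum>j<3. if p!j then col x j else tot x - col x j)"

lemma key_gen:
  assumes "\<And>a b c. x a b c \<ge> 0" "\<And>j. j < 3 \<Longrightarrow> tot x - col x j \<le> col x j"
  shows "\<exists>a b c. 2 * supx x a b c \<ge> tot x \<and> 6 * Rx x [a,b,c] \<ge> 5 * (\<Sum>j<3. col x j)"
proof -
  have c0: "tot x - col x 0 \<le> col x 0" and c1: "tot x - col x 1 \<le> col x 1" and c2: "tot x - col x 2 \<le> col x 2"
    using assms(2) by auto
  show ?thesis
    using c0 c1 c2 assms(1)[of True True True] assms(1)[of True True False] assms(1)[of True False True] assms(1)[of True False False] assms(1)[of False True True] assms(1)[of False True False] assms(1)[of False False True] assms(1)[of False False False]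
    unfolding ex_bool_eq supx_def Rx_def tot_def col_def
    apply (simp add: sum8 numeral_3_eq_3 lessThan_Suc)
    by smt
qed

abbreviation xV :: "bool list list \<Rightarrow> bool \<Rightarrow> bool \<Rightarrow> bool \<Rightarrow> real" where
  "xV V \<equiv> (\<lambda>a b c. real (cnt V a b c))"

lemma L1: "real (length V) = tot (xV V)"
proof -
  have "length (filter (\<lambda>_. True) V) = (\<Sum>a\<in>UNIV. \<Sum>b\<in>UNIV. \<Sum>c\<in>UNIV. if True then cnt V a b c else 0)"
    by (rule count_decomp) auto
  then show ?thesis by (simp add: tot_def)
qed

lemma L2: assumes "j < 3" shows "real (length (filter (\<lambda>v. v!j) V)) = col (xV V) j"
proof -
  have "length (filter (\<lambda>v. v!j) V) = (\<Sum>a\<in>UNIV. \<Sum>b\<in>UNIV. \<Sum>c\<in>UNIV. if [a,b,c]!j then cnt V a b c else 0)"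
  proof (rule count_decomp)
    have "j = 0 \<or> j = 1 \<or> j = 2" using assms by auto
    then show "\<forall>w\<in>set V. (w!j) = ([w!0, w!1, w!2]!j)" by auto
  qed
  then show ?thesis by (simp add: col_def if_distrib cong: if_cong)
qed

lemma supports3: "supports 3 w [a,b,c] \<longleftrightarrow> of_bool (w!0 \<noteq> a) + of_bool (w!1 \<noteq> b) + of_bool (w!2 \<noteq> c) \<le> (1::nat)"
proof -
  have "hamming 3 w [a,b,c] = of_bool (w!0 \<noteq> a) + of_bool (w!1 \<noteq> b) + of_bool (w!2 \<noteq> c)"
    unfolding hamming_def card3 by simp
  then show ?thesis unfolding supports_def by simp
qed

lemma L3: "supported 3 V [a,b,c] \<longleftrightarrow> 2 * supx (xV V) a b c \<ge> tot (xV V)"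
proof -
  have "length (filter (\<lambda>w. supports 3 w [a,b,c]) V) = (\<Sum>a'\<in>UNIV. \<Sum>b'\<in>UNIV. \<Sum>c'\<in>UNIV.
     if of_bool (a' \<noteq> a) + of_bool (b' \<noteq> b) + of_bool (c' \<noteq> c) \<le> (1::nat) then cnt V a' b' c' else 0)"
    by (rule count_decomp) (simp add: supports3)
  then have "real (length (filter (\<lambda>w. supports 3 w [a,b,c]) V)) = supx (xV V) a b c"
    by (simp add: supx_def if_distrib cong: if_cong)
  then show ?thesis unfolding supported_def L1[symmetric] by (simp add: mult.commute)
qed

lemma vm_facts:
  assumes "voter_matrix 3 V"
  shows "tot (xV V) > 0" "\<And>j. j < 3 \<Longrightarrow> tot (xV V) - col (xV V) j \<le> col (xV V) j"
proof -
  show "tot (xV V) > 0" using assms unfolding voter_matrix_def L1[symmetric] by auto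
  fix j :: nat assume j: "j < 3"
  have "length (filter (\<lambda>v. \<not> v ! j) V) \<le> length (filter (\<lambda>v. v ! j) V)"
    using assms j unfolding voter_matrix_def by auto
  moreover have "length (filter (\<lambda>v. v ! j) V) + length (filter (\<lambda>v. \<not> v ! j) V) = length V"
    by (rule sum_length_filter_compl)
  ultimately have "real (length V) - real (length (filter (\<lambda>v. v ! j) V)) \<le> real (length (filter (\<lambda>v. v ! j) V))"
    by linarith
  then show "tot (xV V) - col (xV V) j \<le> col (xV V) j" unfolding L2[OF j] L1[of V] .
qed

lemma L4:
  assumes "voter_matrix 3 V"
  shows "r_p 3 V [a,b,c] = Rx (xV V) [a,b,c] / (\<Sum>j<3. col (xV V) j)"
proof -
  define T where "T = tot (xV V)"
  have T: "T > 0" using vm_facts(1)[OF assms] unfolding T_def .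
  have fy: "frac_Y V j = col (xV V) j / T" if "j < 3" for j
    unfolding frac_Y_def T_def L2[OF that] L1[of V] ..
  have m: "m_V 3 V = ((\<Sum>j<3. col (xV V) j) / T) / 3"
    unfolding m_V_def by (simp add: fy sum_divide_distrib)
  have "R_p 3 V [a,b,c] = (\<Sum>j<3. (if [a,b,c]!j then col (xV V) j else T - col (xV V) j) / T) / 3"
  proof -
    have "(\<Sum>j<3. if [a,b,c]!j then frac_Y V j else 1 - frac_Y V j) = (\<Sum>j<3. (if [a,b,c]!j then col (xV V) j else T - col (xV V) j) / T)"
      using T by (intro sum.cong) (auto simp: fy diff_divide_distrib)
    then show ?thesis unfolding R_p_def by simp
  qed
  also have "\<dots> = (Rx (xV V) [a,b,c] / T) / 3"
    unfolding Rx_def T_def by (simp add: sum_divide_distrib)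
  finally show ?thesis unfolding r_p_def m using T by simp
qed

lemma lower:
  assumes "voter_matrix 3 V"
  shows "\<exists>p. length p = 3 \<and> supported 3 V p \<and> r_p 3 V p \<ge> 5/6"
proof -
  have nn: "\<And>a b c. xV V a b c \<ge> 0" by simp
  obtain a b c where s: "2 * supx (xV V) a b c \<ge> tot (xV V)"
    and r: "6 * Rx (xV V) [a,b,c] \<ge> 5 * (\<Sum>j<3. col (xV V) j)"
    using key_gen[OF nn vm_facts(2)[OF assms]] by blast
  have "col (xV V) j > 0" if "j < 3" for j
    using vm_facts[OF assms] that by force
  then have pos: "(\<Sum>j<3. col (xV V) j) > 0"
    by (intro sum_pos) (auto simp: lessThan_empty_iff)
  have "r_p 3 V [a,b,c] \<ge> 5/6"
    unfolding L4[OF assms] using pos r by (simp add: field_simps)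
  moreover have "supported 3 V [a,b,c]" using s L3 by blast
  ultimately show ?thesis by (intro exI[of _ "[a,b,c]"]) auto
qed

lemma finite_props: "finite {r_p t V p | p. length p = t \<and> supported t V p}"
proof -
  have "{r_p t V p | p. length p = t \<and> supported t V p} \<subseteq> r_p t V ` {p :: bool list. length p = t}" by auto
  moreover have "finite {p :: bool list. length p = t}"
    using finite_lists_length_eq[of "UNIV :: bool set" t] by simp
  ultimately show ?thesis using finite_subset by blast
qed

lemma rV_lower:
  assumes "voter_matrix 3 V"
  shows "r_V 3 V \<ge> 5/6"
proof -
  obtain p where p: "length p = 3" "supported 3 V p" "r_p 3 V p \<ge> 5/6" using lower[OF assms] by blast
  have "r_p 3 V p \<le> r_V 3 V"
    unfolding r_V_def by (rule Max_ge[OF finite_props]) (use p in blast)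
  then show ?thesis using p by linarith
qed

definition Vk :: "nat \<Rightarrow> bool list list" where
  "Vk k = replicate (3*k-3) [True,True,True] @ replicate (k+1) [True,False,False] @
          replicate (k+1) [False,True,False] @ replicate (k+1) [False,False,True]"

lemma cntVk: "k \<ge> 1 \<Longrightarrow> real (cnt (Vk k) a b c) = (if a \<and> b \<and> c then 3 * real k - 3 else
   if (a \<and> \<not>b \<and> \<not>c) \<or> (\<not>a \<and> b \<and> \<not>c) \<or> (\<not>a \<and> \<not>b \<and> c) then real k + 1 else 0)"
  by (cases a; cases b; cases c) (auto simp: cnt_def Vk_def filter_replicate of_nat_diff)

lemma vmVk: assumes "k \<ge> 2" shows "voter_matrix 3 (Vk k)"
proof -
  have "length (filter (\<lambda>v. \<not> v ! j) (Vk k)) \<le> length (filter (\<lambda>v. v ! j) (Vk k))" if "j < 3" for j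
  proof -
    have "j = 0 \<or> j = 1 \<or> j = 2" using that by auto
    then show ?thesis using assms by (auto simp: Vk_def filter_replicate)
  qed
  then show ?thesis unfolding voter_matrix_def by (auto simp: Vk_def)
qed

lemma rpVk:
  assumes "k \<ge> 2" "supported 3 (Vk k) [a,b,c]"
  shows "r_p 3 (Vk k) [a,b,c] \<le> (10 * real k - 2) / (12 * real k - 6)"
proof -
  have k1: "k \<ge> 1" and kr: "real k \<ge> 2" using assms(1) by auto
  show ?thesis
    using assms(2) kr unfolding L3 L4[OF vmVk[OF assms(1)]] supx_def tot_def Rx_def col_def sum8 cntVk[OF k1]
    by (cases a; cases b; cases c) (simp_all add: numeral_3_eq_3 lessThan_Suc divide_simps)
qed

lemma rVk: assumes "k \<ge> 2" shows "r_V 3 (Vk k) \<le> (10 * real k - 2) / (12 * real k - 6)"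
proof -
  have ne: "{r_p 3 (Vk k) p | p. length p = 3 \<and> supported 3 (Vk k) p} \<noteq> {}"
    using lower[OF vmVk[OF assms]] by blast
  have l3: "length p = 3 \<Longrightarrow> \<exists>a b c. p = [a,b,c]" for p :: "bool list"
    by (auto simp: numeral_3_eq_3 length_Suc_conv)
  show ?thesis unfolding r_V_def
  proof (rule Max.boundedI[OF finite_props ne])
    fix y assume "y \<in> {r_p 3 (Vk k) p | p. length p = 3 \<and> supported 3 (Vk k) p}"
    then obtain p where p: "y = r_p 3 (Vk k) p" "length p = 3" "supported 3 (Vk k) p" by blast
    then obtain a b c where "p = [a,b,c]" using l3 by blast
    then show "y \<le> (10 * real k - 2) / (12 * real k - 6)" using rpVk[OF assms] p by blast
  qed
qed

theorem theorem5p5: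
  shows "r_t 3 = 5 / 6"
proof -
  define S where "S = {r_V 3 V | V. voter_matrix 3 V}"
  have ne: "S \<noteq> {}" unfolding S_def using vmVk[of 2] by auto
  have lb: "\<And>y. y \<in> S \<Longrightarrow> 5/6 \<le> y" unfolding S_def using rV_lower by blast
  have bdd: "bdd_below S" using lb by (intro bdd_belowI) 
  have ge: "5/6 \<le> Inf S" by (rule cInf_greatest[OF ne lb])
  have le: "Inf S \<le> 5/6"
  proof (rule ccontr)
    assume "\<not> Inf S \<le> 5/6"
    then have eps: "Inf S - 5/6 > 0" by simp
    obtain n :: nat where n: "1 / (Inf S - 5/6) < real n" using reals_Archimedean2 by blast
    define k where "k = n + 2"
    have k2: "k \<ge> 2" unfolding k_def by simp
    have "real n < 4 * real k - 2" unfolding k_def by simp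
    with n have "1 / (Inf S - 5/6) < 4 * real k - 2" by linarith
    then have small: "1 / (4 * real k - 2) < Inf S - 5/6"
      using eps k2 by (simp add: field_simps)
    have eq: "(10 * real k - 2) / (12 * real k - 6) = 5/6 + 1 / (4 * real k - 2)"
      using k2 by (simp add: field_simps)
    have "Inf S \<le> r_V 3 (Vk k)"
      by (rule cInf_lower[OF _ bdd]) (use vmVk[OF k2] in \<open>auto simp: S_def\<close>)
    also have "\<dots> \<le> 5/6 + 1 / (4 * real k - 2)" using rVk[OF k2] eq by simp
    finally show False using small by linarith
  qed
  show ?thesis unfolding r_t_def S_def[symmetric] using ge le by linarith
qed

end
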